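(* Let $\mathcal{F}$ be a hypergraph and $\mathcal{M}$ a matching of $\mathcal{F}$. Then $\mathcal{M}$ is a maximum matching if and only if there is no $\mathcal{M}$-augmenting set in $\mathcal{F}$.
   Context: A hypergraph (set system) $\mathcal{F}$ is a finite collection of distinct subsets of a vertex set (no uniformity is assumed). A matching is a collection of pairwise disjoint members of $\mathcal{F}$; it is maximum if no matching of $\mathcal{F}$ has more members. For $\mathcal{C}\subseteq\mathcal{F}$, write $X_{\mathcal{C}}=\bigcup_{A\in\mathcal{C}}A$ and $\mathcal{C}_x=\{A\in\mathcal{C}:x\in A\}$. Given a matching $\mathcal{M}$, a subfamily $\mathcal{C}\subseteq\mathcal{F}$ is an $\mathcal{M}$-augmenting set if: (1) $|\mathcal{M}\cap\mathcal{C}|<|\mathcal{C}\setminus\mathcal{M}|$; (2) whenever $B\in\mathcal{M}$ and $B\cap A\neq\emptyset$ for some $A\in\mathcal{C}$, then $B\in\mathcal{C}$; (3) $|\mathcal{C}_x\setminus\mathcal{M}|\leq 1$ for every $x\in X_{\mathcal{C}}$ (i.e., the members of $\mathcal{C}\setminus\mathcal{M}$ are pairwise disjoint). *)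

theory Defs
  imports Main
begin

text \<open>A hypergraph is a finite family F of distinct subsets of a vertex type 'a.\<close>

definition is_matching :: "'a set set \<Rightarrow> 'a set set \<Rightarrow> bool" where
  "is_matching F M \<longleftrightarrow> M \<subseteq> F \<and> (\<forall>A\<in>M. \<forall>B\<in>M. A \<noteq> B \<longrightarrow> A \<inter> B = {})"

definition is_maximum_matching :: "'a set set \<Rightarrow> 'a set set \<Rightarrow> bool" where
  "is_maximum_matching F M \<longleftrightarrow> is_matching F M \<and>
     (\<forall>N. is_matching F N \<longrightarrow> card N \<le> card M)"

definition sub_at :: "'a set set \<Rightarrow> 'a \<Rightarrow> 'a set set" where
  "sub_at C x = {A \<in> C. x \<in> A}"

definition is_augmenting_set :: "'a set set \<Rightarrow> 'a set set \<Rightarrow> 'a set set \<Rightarrow> bool" where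
  "is_augmenting_set F M C \<longleftrightarrow> C \<subseteq> F \<and>
     card (M \<inter> C) < card (C - M) \<and>
     (\<forall>B\<in>M. (\<exists>A\<in>C. B \<inter> A \<noteq> {}) \<longrightarrow> B \<in> C) \<and>
     (\<forall>x\<in>\<Union>C. card (sub_at C x - M) \<le> 1)"

end

theory Submission
  imports Defs
begin

lemma card_split: "finite M \<Longrightarrow> card M = card (M - N) + card (M \<inter> N)"
proof -
  assume f: "finite M"
  have "M = (M - N) \<union> (M \<inter> N)" by blast
  hence "card M = card ((M - N) \<union> (M \<inter> N))" by simp
  also have "\<dots> = card (M - N) + card (M \<inter> N)" using f by (intro card_Un_disjoint) auto
  finally show ?thesis .
qed

lemma card_le1: "finite S \<Longrightarrow> (\<And>a b. a \<in> S \<Longrightarrow> b \<in> S \<Longrightarrow> a = b) \<Longrightarrow> card S \<le> 1"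
  using card_le_Suc0_iff_eq by (metis One_nat_def)

theorem lemma1:
  fixes F M :: "'a set set"
  assumes "finite F"
    and "is_matching F M"
  shows "is_maximum_matching F M \<longleftrightarrow> \<not> (\<exists>C. is_augmenting_set F M C)"
proof
  assume mx: "is_maximum_matching F M"
  show "\<not> (\<exists>C. is_augmenting_set F M C)"
  proof
    assume "\<exists>C. is_augmenting_set F M C"
    then obtain C where C: "is_augmenting_set F M C" by blast
    have MF: "M \<subseteq> F" using assms(2) by (simp add: is_matching_def)
    have CF: "C \<subseteq> F" using C by (simp add: is_augmenting_set_def)
    have fM: "finite M" "finite C" using MF CF assms(1) finite_subset by auto
    define N where "N = (M - C) \<union> (C - M)"
    have disjC: "A \<inter> B = {}" if "A \<in> C - M" "B \<in> C - M" "A \<noteq> B" for A B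
    proof (rule ccontr)
      assume "A \<inter> B \<noteq> {}"
      then obtain x where x: "x \<in> A" "x \<in> B" by blast
      have "x \<in> \<Union>C" using that x by blast
      hence le: "card (sub_at C x - M) \<le> 1" using C unfolding is_augmenting_set_def by blast
      have "{A, B} \<subseteq> sub_at C x - M" using that x by (auto simp: sub_at_def)
      hence "card {A,B} \<le> card (sub_at C x - M)"
        by (intro card_mono) (use fM in \<open>auto simp: sub_at_def\<close>)
      with le that(3) show False by simp
    qed
    have "is_matching F N"
      unfolding is_matching_def N_def
    proof (intro conjI ballI impI)
      show "M - C \<union> (C - M) \<subseteq> F" using MF CF by blast
    next
      fix A B assume A: "A \<in> M - C \<union> (C - M)" and B: "B \<in> M - C \<union> (C - M)" and ne: "A \<noteq> B"
      have aug2: "\<forall>B\<in>M. (\<exists>A\<in>C. B \<inter> A \<noteq> {}) \<longrightarrow> B \<in> C" using C by (simp add: is_augmenting_set_def)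
      have mm: "\<forall>A\<in>M. \<forall>B\<in>M. A \<noteq> B \<longrightarrow> A \<inter> B = {}" using assms(2) by (simp add: is_matching_def)
      show "A \<inter> B = {}"
        using A B ne disjC[of A B] mm aug2 by (auto simp: Int_commute)
    qed
    hence "card N \<le> card M" using mx by (simp add: is_maximum_matching_def)
    moreover have "card N = card (M - C) + card (C - M)"
      unfolding N_def using fM by (intro card_Un_disjoint) auto
    moreover have "card M = card (M - C) + card (M \<inter> C)"
      using fM card_split by blast
      
    moreover have "card (M \<inter> C) < card (C - M)" using C by (simp add: is_augmenting_set_def)
    ultimately show False by simp
  qed
next
  assume na: "\<not> (\<exists>C. is_augmenting_set F M C)"
  show "is_maximum_matching F M"
  proof (rule ccontr)
    assume "\<not> is_maximum_matching F M"
    then obtain N where N: "is_matching F N" and lt: "card M < card N"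
      using assms(2) by (auto simp: is_maximum_matching_def)
    have MF: "M \<subseteq> F" using assms(2) by (simp add: is_matching_def)
    have NF: "N \<subseteq> F" using N by (simp add: is_matching_def)
    have fin: "finite M" "finite N" using MF NF assms(1) finite_subset by auto
    have mm: "\<forall>A\<in>M. \<forall>B\<in>M. A \<noteq> B \<longrightarrow> A \<inter> B = {}" using assms(2) by (simp add: is_matching_def)
    have nn: "\<forall>A\<in>N. \<forall>B\<in>N. A \<noteq> B \<longrightarrow> A \<inter> B = {}" using N by (simp add: is_matching_def)
    define C where "C = (M - N) \<union> (N - M)"
    have "is_augmenting_set F M C"
      unfolding is_augmenting_set_def
    proof (intro conjI ballI impI)
      show "C \<subseteq> F" using MF NF C_def by blast
    next
      have e1: "M \<inter> C = M - N" "C - M = N - M" using C_def by auto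
      have "card M = card (M - N) + card (M \<inter> N)"
        using fin card_split by blast
      moreover have "card N = card (N - M) + card (M \<inter> N)"
        using fin card_split[of N M] by (simp add: Int_commute)
      ultimately show "card (M \<inter> C) < card (C - M)" using lt e1 by simp
    next
      fix B assume B: "B \<in> M" and ex: "\<exists>A\<in>C. B \<inter> A \<noteq> {}"
      then obtain A where A: "A \<in> C" "B \<inter> A \<noteq> {}" by blast
      show "B \<in> C"
      proof (rule ccontr)
        assume "B \<notin> C"
        hence BN: "B \<in> N" using B C_def by blast
        have "A \<noteq> B" using A \<open>B \<notin> C\<close> by blast
        thus False using A B BN mm nn C_def by auto
      qed
    next
      fix x assume "x \<in> \<Union>C"
      show "card (sub_at C x - M) \<le> 1"
      proof (rule card_le1)
        show "finite (sub_at C x - M)" using fin C_def by (auto simp: sub_at_def)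
      next
        fix a b assume "a \<in> sub_at C x - M" "b \<in> sub_at C x - M"
        thus "a = b" using nn C_def by (auto simp: sub_at_def)
      qed
    qed
    thus False using na by blast
  qed
qed

end
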